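(* Let $C=\{c_1,\dots,c_m\}\subset\mathbb{R}$ with $c_1\le c_2\le\dots\le c_m$, let $\mathcal{I}$ be a finite set of closed intervals in $\mathbb{R}$, and let $f\ge0$ be an integer such that every interval $I\in\mathcal{I}$ satisfies $|I\cap C|>f$. Then $T\subseteq C$ is an $f$-tolerant hitting set of $\mathcal{I}$ if and only if $|T\cap C_{i,j}|\ge\delta_{i,j}(f)$ for all $1\le i\le j\le m$.
   Context: A set $X\subseteq C$ hits $\mathcal{I}$ (is a hitting set) if every interval of $\mathcal{I}$ contains a point of $X$. $T\subseteq C$ is an $f$-tolerant hitting set of $\mathcal{I}$ if for every $J\subseteq C$ with $|J|\le f$ there exists $R\subseteq C\setminus J$ with $|(T\setminus J)\cup R|\le|T|$ such that $(T\setminus J)\cup R$ hits $\mathcal{I}$. For a set of points $X$, a set of intervals is $X$-disjoint if every point of $X$ lies in at most one of its intervals. For $1\le i\le j\le m$: $C_{i,j}=\{c_i,\dots,c_j\}$; $\mathcal{I}_{i,j}=\{I\in\mathcal{I}: I\cap C\subseteq C_{i,j}\}$; for $J\subseteq C_{i,j}$, $\delta_{i,j}(J)$ is the maximum size of a $(C_{i,j}\setminus J)$-disjoint subset of $\mathcal{I}_{i,j}$; and $\delta_{i,j}(f)=\max_{J\subseteq C_{i,j},|J|\le f}\delta_{i,j}(J)$. (In the application, $\mathcal{I}$ consists of the intervals of length $2r$ centered at the voters.) *)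

theory Defs
  imports Complex_Main
begin

definition hits :: "real set \<Rightarrow> real set set \<Rightarrow> bool" where
  "hits X Is \<longleftrightarrow> (\<forall>I\<in>Is. X \<inter> I \<noteq> {})"

definition tolerant_hitting_set :: "nat \<Rightarrow> real set \<Rightarrow> real set set \<Rightarrow> real set \<Rightarrow> bool" where
  "tolerant_hitting_set f C Is T \<longleftrightarrow> T \<subseteq> C \<and>
     (\<forall>J. J \<subseteq> C \<and> card J \<le> f \<longrightarrow>
        (\<exists>R. R \<subseteq> C - J \<and> card ((T - J) \<union> R) \<le> card T \<and> hits ((T - J) \<union> R) Is))"

definition X_disjoint :: "real set \<Rightarrow> real set set \<Rightarrow> bool" where
  "X_disjoint X S \<longleftrightarrow> (\<forall>x\<in>X. card {I\<in>S. x \<in> I} \<le> 1)"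

definition Cij :: "(nat \<Rightarrow> real) \<Rightarrow> nat \<Rightarrow> nat \<Rightarrow> real set" where
  "Cij c i j = c ` {i..j}"

definition Iij :: "real set \<Rightarrow> (nat \<Rightarrow> real) \<Rightarrow> real set set \<Rightarrow> nat \<Rightarrow> nat \<Rightarrow> real set set" where
  "Iij C c Is i j = {I\<in>Is. I \<inter> C \<subseteq> Cij c i j}"

definition delta_set :: "real set \<Rightarrow> (nat \<Rightarrow> real) \<Rightarrow> real set set \<Rightarrow> nat \<Rightarrow> nat \<Rightarrow> real set \<Rightarrow> nat" where
  "delta_set C c Is i j J =
     Max (card ` {S. S \<subseteq> Iij C c Is i j \<and> X_disjoint (Cij c i j - J) S})"

definition delta_f :: "real set \<Rightarrow> (nat \<Rightarrow> real) \<Rightarrow> real set set \<Rightarrow> nat \<Rightarrow> nat \<Rightarrow> nat \<Rightarrow> nat" where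
  "delta_f C c Is i j f =
     Max {delta_set C c Is i j J | J. J \<subseteq> Cij c i j \<and> card J \<le> f}"

end

theory Submission
  imports Defs
begin

lemma X_disjoint_iff:
  assumes "finite S"
  shows "X_disjoint X S \<longleftrightarrow> (\<forall>I1\<in>S. \<forall>I2\<in>S. \<forall>x\<in>X. x \<in> I1 \<and> x \<in> I2 \<longrightarrow> I1 = I2)"
  unfolding X_disjoint_def using assms
  by (auto simp: card_le_Suc0_iff_eq)

lemma stab:
  fixes U :: "real set set" and P :: "real set"
  assumes "finite U" "finite P"
    and "\<forall>I\<in>U. \<exists>x y. x \<le> y \<and> I = {x..y}"
    and "\<forall>I\<in>U. P \<inter> I \<noteq> {}"
  shows "\<exists>R S. R \<subseteq> P \<and> S \<subseteq> U \<and> (\<forall>I\<in>U. R \<inter> I \<noteq> {}) \<and>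
     (\<forall>I1\<in>S. \<forall>I2\<in>S. \<forall>x\<in>P. x \<in> I1 \<and> x \<in> I2 \<longrightarrow> I1 = I2) \<and> card R \<le> card S"
  using assms
proof (induction U rule: finite_psubset_induct)
  case (psubset U)
  show ?case
  proof (cases "U = {}")
    case True
    then show ?thesis by (intro exI[of _ "{}"]) auto
  next
    case False
    define y0 where "y0 = Min (Sup ` U)"
    have "y0 \<in> Sup ` U" unfolding y0_def using False psubset.hyps by (intro Min_in) auto
    then obtain I0 where I0: "I0 \<in> U" "Sup I0 = y0" by auto
    have I0min: "Sup I0 \<le> Sup I" if "I \<in> U" for I
      using I0(2) Min_le[of "Sup ` U" "Sup I"] that psubset.hyps unfolding y0_def by simp
    have "\<exists>x y. x \<le> y \<and> I0 = {x..y}" using bspec[OF psubset.prems(2) I0(1)] .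
    then obtain a0 b0 where ab0: "a0 \<le> b0" "I0 = {a0..b0}" by (elim exE conjE)
    define p where "p = Max (P \<inter> I0)"
    have PI0: "finite (P \<inter> I0)" "P \<inter> I0 \<noteq> {}" using psubset.prems I0 by auto
    have pin: "p \<in> P" "p \<in> I0" using Max_in[OF PI0] unfolding p_def by auto
    have pmax: "x \<le> p" if "x \<in> P" "x \<in> I0" for x
      using Max_ge[OF PI0(1)] that unfolding p_def by auto
    define U' where "U' = {I\<in>U. p \<notin> I}"
    have "U' \<subset> U" using I0 pin unfolding U'_def by auto
    have U'U: "U' \<subseteq> U" unfolding U'_def by blast
    have h1: "\<forall>I\<in>U'. \<exists>x y. x \<le> y \<and> I = {x..y}"
    proof
      fix I assume "I \<in> U'"
      then have "I \<in> U" using U'U by blast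
      then show "\<exists>x y. x \<le> y \<and> I = {x..y}" by (rule bspec[OF psubset.prems(2)])
    qed
    have h2: "\<forall>I\<in>U'. P \<inter> I \<noteq> {}" using psubset.prems(3) U'U by blast
    have "\<exists>R S. R \<subseteq> P \<and> S \<subseteq> U' \<and> (\<forall>I\<in>U'. R \<inter> I \<noteq> {}) \<and>
     (\<forall>I1\<in>S. \<forall>I2\<in>S. \<forall>x\<in>P. x \<in> I1 \<and> x \<in> I2 \<longrightarrow> I1 = I2) \<and> card R \<le> card S"
      by (rule psubset.IH[OF \<open>U' \<subset> U\<close> psubset.prems(1) h1 h2])
    then obtain R' S' where RS': "R' \<subseteq> P" "S' \<subseteq> U'" "\<forall>I\<in>U'. R' \<inter> I \<noteq> {}"
      "\<forall>I1\<in>S'. \<forall>I2\<in>S'. \<forall>x\<in>P. x \<in> I1 \<and> x \<in> I2 \<longrightarrow> I1 = I2" "card R' \<le> card S'"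
      by (elim exE conjE)
    have finR': "finite R'" using RS'(1) psubset.prems(1) finite_subset by blast
    have "S' \<subseteq> U" using RS'(2) unfolding U'_def by blast
    then have finS': "finite S'" using psubset.hyps by (rule finite_subset)
    have I0S': "I0 \<notin> S'" using RS'(2) pin unfolding U'_def by auto
    have disj: "False" if "I \<in> S'" "x \<in> P" "x \<in> I0" "x \<in> I" for I x
    proof -
      have IU: "I \<in> U" "p \<notin> I" using that RS'(2) unfolding U'_def by auto
      have "\<exists>x y. x \<le> y \<and> I = {x..y}" using bspec[OF psubset.prems(2) IU(1)] .
      then obtain a b where ab: "a \<le> b" "I = {a..b}" by (elim exE conjE)
      have "b0 \<le> b" using I0min[OF IU(1)] ab ab0 by simp
      moreover have "x \<le> p" using pmax that by auto
      moreover have "p \<le> b0" using pin ab0 by auto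
      ultimately have "p \<in> I" using that ab by auto
      then show False using IU by simp
    qed
    show ?thesis
    proof (intro exI[of _ "insert p R'"] exI[of _ "insert I0 S'"] conjI)
      show "insert p R' \<subseteq> P" using RS'(1) pin by auto
      show "insert I0 S' \<subseteq> U" using RS'(2) I0 unfolding U'_def by auto
      show "\<forall>I\<in>U. insert p R' \<inter> I \<noteq> {}" using RS'(3) unfolding U'_def by auto
      show "\<forall>I1\<in>insert I0 S'. \<forall>I2\<in>insert I0 S'. \<forall>x\<in>P. x \<in> I1 \<and> x \<in> I2 \<longrightarrow> I1 = I2"
      proof (intro ballI impI)
        fix I1 I2 x assume a: "I1 \<in> insert I0 S'" "I2 \<in> insert I0 S'" "x \<in> P" "x \<in> I1 \<and> x \<in> I2"
        show "I1 = I2"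
        proof (cases "I1 = I0")
          case True
          then show ?thesis using a disj by (cases "I2 = I0") auto
        next
          case False
          then have "I1 \<in> S'" using a by simp
          show ?thesis
          proof (cases "I2 = I0")
            case True
            then show ?thesis using disj[OF \<open>I1 \<in> S'\<close> a(3)] a(4) by blast
          next
            case False
            then have "I2 \<in> S'" using a by simp
            then show ?thesis using RS'(4) \<open>I1 \<in> S'\<close> a(3,4) by blast
          qed
        qed
      qed
      show "card (insert p R') \<le> card (insert I0 S')"
        using RS'(5) finR' finS' I0S' by (simp add: card_insert_if)
    qed
  qed
qed

lemma X_disjoint_mono:
  assumes "X_disjoint X S" "S' \<subseteq> S" "X' \<subseteq> X" "finite S"
  shows "X_disjoint X' S'"
  unfolding X_disjoint_def
proof
  fix x assume x: "x \<in> X'"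
  have "card {I \<in> S'. x \<in> I} \<le> card {I \<in> S. x \<in> I}"
    using assms by (intro card_mono) auto
  also have "\<dots> \<le> 1" using assms x unfolding X_disjoint_def by auto
  finally show "card {I \<in> S'. x \<in> I} \<le> 1" .
qed

lemma delta_ge:
  assumes fin: "finite Is" and S: "S \<subseteq> Iij C c Is a b"
    and dis: "X_disjoint (Cij c a b - J') S" and J': "J' \<subseteq> Cij c a b" "card J' \<le> f"
  shows "card S \<le> delta_f C c Is a b f"
proof -
  have f1: "finite (card ` {S. S \<subseteq> Iij C c Is a b \<and> X_disjoint (Cij c a b - J') S})"
  proof -
    have "finite (Iij C c Is a b)" using fin unfolding Iij_def by auto
    then have "finite {S. S \<subseteq> Iij C c Is a b \<and> X_disjoint (Cij c a b - J') S}" by simp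
    then show ?thesis by simp
  qed
  have "card S \<le> delta_set C c Is a b J'"
    unfolding delta_set_def using S dis by (intro Max_ge[OF f1]) auto
  also have "\<dots> \<le> delta_f C c Is a b f"
  proof -
    have "{delta_set C c Is a b J | J. J \<subseteq> Cij c a b \<and> card J \<le> f}
          \<subseteq> (\<lambda>J. delta_set C c Is a b J) ` Pow (Cij c a b)" by auto
    moreover have "finite (Cij c a b)" unfolding Cij_def by simp
    ultimately have "finite {delta_set C c Is a b J | J. J \<subseteq> Cij c a b \<and> card J \<le> f}"
      by (meson finite_Pow_iff finite_imageI finite_subset)
    then show ?thesis unfolding delta_f_def using J' by (intro Max_ge) auto
  qed
  finally show ?thesis .
qed

lemma block:
  fixes c :: "nat \<Rightarrow> real"
  assumes sorted: "\<forall>i j. 1 \<le> i \<and> i \<le> j \<and> j \<le> m \<longrightarrow> c i \<le> c j"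
    and distinct: "inj_on c {1..m}"
    and fin: "finite Is"
    and closed_intervals: "\<forall>I\<in>Is. \<exists>a b. a \<le> b \<and> I = {a..b}"
    and big: "\<forall>I\<in>Is. card (I \<inter> c ` {1..m}) > f"
    and hyp: "\<forall>i j. 1 \<le> i \<and> i \<le> j \<and> j \<le> m \<longrightarrow>
            card (T \<inter> Cij c i j) \<ge> delta_f (c ` {1..m}) c Is i j f"
    and J: "J \<subseteq> c ` {1..m}" and Jf: "card J \<le> f"
  shows "1 \<le> a \<Longrightarrow> b \<le> m \<Longrightarrow> S \<subseteq> Iij (c ` {1..m}) c Is a b \<Longrightarrow> (\<forall>I\<in>S. I \<inter> (T - J) = {})
    \<Longrightarrow> X_disjoint (c ` {1..m} - J) S \<Longrightarrow> card S \<le> card (T \<inter> J \<inter> Cij c a b)"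
proof (induction "b + 1 - a" arbitrary: a b S rule: less_induct)
  case less
  let ?C = "c ` {1..m}"
  have finS: "finite S" using less.prems(3) fin unfolding Iij_def by (auto intro: finite_subset)
  show ?case
  proof (cases "a \<le> b")
    case False
    have "S = {}"
    proof (rule ccontr)
      assume "S \<noteq> {}"
      then obtain I where I: "I \<in> S" by auto
      then have "I \<in> Is" "I \<inter> ?C \<subseteq> Cij c a b" using less.prems(3) unfolding Iij_def by auto
      moreover have "Cij c a b = {}" using False unfolding Cij_def by auto
      ultimately show False using big by fastforce
    qed
    then show ?thesis by simp
  next
    case ab: True
    show ?thesis
    proof (cases "\<exists>k\<in>{a..b}. c k \<in> T - J")
      case False
      have "X_disjoint (Cij c a b - J \<inter> Cij c a b) S"
        using less.prems(5) less.prems(1,2) unfolding X_disjoint_def Cij_def by auto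
      then have "card S \<le> delta_f ?C c Is a b f"
      proof (rule delta_ge[OF fin less.prems(3)])
        have "finite J" using J finite_subset by blast
        then have "card (J \<inter> Cij c a b) \<le> card J" by (intro card_mono) auto
        then show "card (J \<inter> Cij c a b) \<le> f" using Jf by simp
      qed auto
      also have "\<dots> \<le> card (T \<inter> Cij c a b)" using hyp ab less.prems(1,2) by auto
      also have "T \<inter> Cij c a b = T \<inter> J \<inter> Cij c a b" using False unfolding Cij_def by auto
      finally show ?thesis .
    next
      case True
      then obtain k where k: "a \<le> k" "k \<le> b" "c k \<in> T" "c k \<notin> J" by auto
      define S1 where "S1 = {I\<in>S. I \<inter> ?C \<subseteq> Cij c a (k - 1)}"
      define S2 where "S2 = S - S1"
      have S2sub: "I \<inter> ?C \<subseteq> Cij c (k+1) b" if "I \<in> S2" for I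
      proof
        fix x assume x: "x \<in> I \<inter> ?C"
        have IS: "I \<in> S" "\<not> I \<inter> ?C \<subseteq> Cij c a (k - 1)" using that unfolding S2_def S1_def by auto
        have IC: "I \<inter> ?C \<subseteq> c ` {a..b}" "I \<in> Is" using IS less.prems(3) unfolding Iij_def Cij_def by auto
        have ckI: "c k \<notin> I" using less.prems(4) IS k by auto
        have "\<exists>x y. x \<le> y \<and> I = {x..y}" using bspec[OF closed_intervals IC(2)] .
        then obtain lo hi where I: "I = {lo..hi}" by (elim exE conjE)
        obtain q where q: "x = c q" "q \<in> {a..b}" using IC x by auto
        have "q \<noteq> k" using q x ckI by auto
        moreover have "\<not> q < k"
        proof
          assume qk: "q < k"
          obtain y where y: "y \<in> I \<inter> ?C" "y \<notin> Cij c a (k - 1)" using IS by auto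
          obtain r where r: "y = c r" "r \<in> {a..b}" using IC y by auto
          have "r \<noteq> k" using r y ckI by auto
          moreover have "\<not> r \<le> k - 1" using r y unfolding Cij_def by auto
          ultimately have rk: "k < r" by auto
          have "c q \<le> c k" "c k \<le> c r" using sorted qk rk q r k less.prems(1,2) by auto
          then have "c k \<in> I" using x y q r I by auto
          then show False using ckI by simp
        qed
        ultimately show "x \<in> Cij c (k+1) b" using q unfolding Cij_def by auto
      qed
      have IH1: "card S1 \<le> card (T \<inter> J \<inter> Cij c a (k - 1))"
        apply (rule less.hyps[of "k - 1" a])
        using k less.prems X_disjoint_mono[OF less.prems(5) _ _ finS]
        unfolding S1_def Iij_def by auto
      have S2I: "S2 \<subseteq> Iij ?C c Is (k+1) b"
        using S2sub less.prems(3) unfolding S2_def Iij_def by blast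
      have IH2: "card S2 \<le> card (T \<inter> J \<inter> Cij c (k+1) b)"
        apply (rule less.hyps[of b "k+1", OF _ _ _ S2I])
        using k less.prems X_disjoint_mono[OF less.prems(5) _ _ finS]
        unfolding S2_def by auto
      have "card S = card S1 + card S2" unfolding S2_def S1_def using finS
        by (metis (no_types, lifting) S1_def card_Diff_subset finite_subset le_add_diff_inverse mem_Collect_eq subsetI card_mono)
      also have "\<dots> \<le> card (T \<inter> J \<inter> Cij c a (k - 1)) + card (T \<inter> J \<inter> Cij c (k+1) b)"
        using IH1 IH2 by simp
      also have "\<dots> = card ((T \<inter> J \<inter> Cij c a (k - 1)) \<union> (T \<inter> J \<inter> Cij c (k+1) b))"
      proof (rule card_Un_disjoint[symmetric])
        have "c ` ({a..k-1} \<inter> {k+1..b}) = c ` {a..k-1} \<inter> c ` {k+1..b}"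
          using less.prems(1,2) k by (intro inj_on_image_Int[OF distinct]) auto
        moreover have "{a..k-1} \<inter> {k+1..b} = {}" by auto
        ultimately show "T \<inter> J \<inter> Cij c a (k - 1) \<inter> (T \<inter> J \<inter> Cij c (k + 1) b) = {}"
          unfolding Cij_def by auto
      qed (auto simp: Cij_def)
      also have "\<dots> \<le> card (T \<inter> J \<inter> Cij c a b)"
        using k by (intro card_mono) (auto simp: Cij_def)
      finally show ?thesis .
    qed
  qed
qed

lemma forward_core:
  fixes c :: "nat \<Rightarrow> real"
  assumes tol: "tolerant_hitting_set f (c ` {1..m}) Is T"
    and fin: "finite Is"
    and ij: "1 \<le> i" "j \<le> m"
    and J: "J \<subseteq> Cij c i j" "card J \<le> f"
    and S: "S \<subseteq> Iij (c ` {1..m}) c Is i j" "X_disjoint (Cij c i j - J) S"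
  shows "card S \<le> card (T \<inter> Cij c i j)"
proof -
  let ?C = "c ` {1..m}"
  have CC: "Cij c i j \<subseteq> ?C" using ij unfolding Cij_def by auto
  have TC: "T \<subseteq> ?C" using tol unfolding tolerant_hitting_set_def by blast
  have JC: "J \<subseteq> ?C \<and> card J \<le> f" using J CC by blast
  have all: "\<forall>J. J \<subseteq> ?C \<and> card J \<le> f \<longrightarrow>
        (\<exists>R. R \<subseteq> ?C - J \<and> card ((T - J) \<union> R) \<le> card T \<and> hits ((T - J) \<union> R) Is)"
    using tol unfolding tolerant_hitting_set_def by (rule conjunct2)
  have "\<exists>R. R \<subseteq> ?C - J \<and> card ((T - J) \<union> R) \<le> card T \<and> hits ((T - J) \<union> R) Is"
    using mp[OF spec[OF all, of J] JC] .
  then obtain R where R: "R \<subseteq> ?C - J" "card ((T - J) \<union> R) \<le> card T" "hits ((T - J) \<union> R) Is"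
    by (elim exE conjE)
  define X where "X = (T - J) \<union> R"
  have XC: "X \<subseteq> ?C" "X \<inter> J = {}" using R TC unfolding X_def by auto
  have finC: "finite ?C" by simp
  have finX: "finite X" "finite T" using finite_subset[OF XC(1) finC] finite_subset[OF TC finC] by auto
  have finS: "finite S" using S fin unfolding Iij_def by (auto intro: finite_subset)
  define g where "g I = (SOME x. x \<in> X \<inter> I)" for I
  have g: "g I \<in> X \<inter> I" if "I \<in> S" for I
  proof -
    have "I \<in> Is" using that S unfolding Iij_def by auto
    then have "X \<inter> I \<noteq> {}" using R(3) unfolding hits_def X_def by blast
    then have "\<exists>x. x \<in> X \<inter> I" by blast
    then show ?thesis unfolding g_def by (rule someI_ex)
  qed
  have gC: "g I \<in> X \<inter> Cij c i j" if "I \<in> S" for I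
  proof -
    have "I \<inter> ?C \<subseteq> Cij c i j" using that S unfolding Iij_def by auto
    then show ?thesis using g[OF that] XC by auto
  qed
  have inj: "inj_on g S"
  proof (rule inj_onI)
    fix I1 I2 assume a: "I1 \<in> S" "I2 \<in> S" "g I1 = g I2"
    have "g I1 \<in> Cij c i j - J" using gC[OF a(1)] XC by auto
    moreover have "g I1 \<in> I1" using g[OF a(1)] by blast
    moreover have "g I1 \<in> I2" using g[OF a(2)] a(3) by simp
    moreover have dd: "\<forall>I1\<in>S. \<forall>I2\<in>S. \<forall>x\<in>Cij c i j - J. x \<in> I1 \<and> x \<in> I2 \<longrightarrow> I1 = I2"
      using S(2) X_disjoint_iff[OF finS] by simp
    ultimately show "I1 = I2" using dd a(1,2) by blast
  qed
  have "card S = card (g ` S)" using inj by (simp add: card_image)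
  also have "\<dots> \<le> card (X \<inter> Cij c i j)" using gC finX by (intro card_mono) auto
  also have "\<dots> \<le> card (T \<inter> Cij c i j)"
  proof -
    have "card X = card (X \<inter> Cij c i j) + card (X - Cij c i j)" using finX(1) by (rule card_Int_Diff)
    moreover have "card T = card (T \<inter> Cij c i j) + card (T - Cij c i j)" using finX(2) by (rule card_Int_Diff)
    moreover have "card (T - Cij c i j) \<le> card (X - Cij c i j)"
      using finX J(1) unfolding X_def by (intro card_mono) auto
    moreover have "card X \<le> card T" using R(2) unfolding X_def .
    ultimately show ?thesis by linarith
  qed
  finally show ?thesis .
qed

theorem lemma3:
  fixes c :: "nat \<Rightarrow> real" and m f :: nat and Is :: "real set set" and T :: "real set"
  assumes sorted: "\<forall>i j. 1 \<le> i \<and> i \<le> j \<and> j \<le> m \<longrightarrow> c i \<le> c j"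
    and distinct: "inj_on c {1..m}"
    and fin: "finite Is"
    and closed_intervals: "\<forall>I\<in>Is. \<exists>a b. a \<le> b \<and> I = {a..b}"
    and big: "\<forall>I\<in>Is. card (I \<inter> c ` {1..m}) > f"
    and TC: "T \<subseteq> c ` {1..m}"
  shows "tolerant_hitting_set f (c ` {1..m}) Is T \<longleftrightarrow>
         (\<forall>i j. 1 \<le> i \<and> i \<le> j \<and> j \<le> m \<longrightarrow>
            card (T \<inter> Cij c i j) \<ge> delta_f (c ` {1..m}) c Is i j f)"
proof
  let ?C = "c ` {1..m}"
  assume tol: "tolerant_hitting_set f ?C Is T"
  show "\<forall>i j. 1 \<le> i \<and> i \<le> j \<and> j \<le> m \<longrightarrow> card (T \<inter> Cij c i j) \<ge> delta_f ?C c Is i j f"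
  proof (intro allI impI)
    fix i j assume ij: "1 \<le> i \<and> i \<le> j \<and> j \<le> m"
    have finCij: "finite (Cij c i j)" unfolding Cij_def by simp
    have finI: "finite (Iij ?C c Is i j)" using fin unfolding Iij_def by auto
    have A: "{delta_set ?C c Is i j J | J. J \<subseteq> Cij c i j \<and> card J \<le> f}
          \<subseteq> (\<lambda>J. delta_set ?C c Is i j J) ` Pow (Cij c i j)" by auto
    have finA: "finite {delta_set ?C c Is i j J | J. J \<subseteq> Cij c i j \<and> card J \<le> f}"
      by (rule finite_subset[OF A]) (simp add: finCij)
    show "delta_f ?C c Is i j f \<le> card (T \<inter> Cij c i j)"
      unfolding delta_f_def
    proof (rule Max.boundedI[OF finA])
      show "{delta_set ?C c Is i j J | J. J \<subseteq> Cij c i j \<and> card J \<le> f} \<noteq> {}" by auto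
    next
      fix d assume "d \<in> {delta_set ?C c Is i j J | J. J \<subseteq> Cij c i j \<and> card J \<le> f}"
      then obtain J where J: "d = delta_set ?C c Is i j J" "J \<subseteq> Cij c i j" "card J \<le> f" by blast
      have finB: "finite (card ` {S. S \<subseteq> Iij ?C c Is i j \<and> X_disjoint (Cij c i j - J) S})"
        using finI by simp
      show "d \<le> card (T \<inter> Cij c i j)" unfolding J(1) delta_set_def
      proof (rule Max.boundedI[OF finB])
        have "{} \<in> {S. S \<subseteq> Iij ?C c Is i j \<and> X_disjoint (Cij c i j - J) S}"
          unfolding X_disjoint_def by simp
        then show "card ` {S. S \<subseteq> Iij ?C c Is i j \<and> X_disjoint (Cij c i j - J) S} \<noteq> {}" by blast
      next
        fix n assume "n \<in> card ` {S. S \<subseteq> Iij ?C c Is i j \<and> X_disjoint (Cij c i j - J) S}"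
        then obtain S where S: "n = card S" "S \<subseteq> Iij ?C c Is i j" "X_disjoint (Cij c i j - J) S" by blast
        have "1 \<le> i" "j \<le> m" using ij by auto
        from forward_core[OF tol fin this J(2,3) S(2,3)]
        show "n \<le> card (T \<inter> Cij c i j)" unfolding S(1) .
      qed
    qed
  qed
next
  let ?C = "c ` {1..m}"
  assume hyp: "\<forall>i j. 1 \<le> i \<and> i \<le> j \<and> j \<le> m \<longrightarrow> card (T \<inter> Cij c i j) \<ge> delta_f ?C c Is i j f"
  have finC: "finite ?C" by simp
  have finT: "finite T" using TC finC finite_subset by blast
  show "tolerant_hitting_set f ?C Is T"
    unfolding tolerant_hitting_set_def
  proof (intro conjI allI impI)
    show "T \<subseteq> ?C" by (rule TC)
    fix J assume J: "J \<subseteq> ?C \<and> card J \<le> f"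
    have finJ: "finite J" using J finC finite_subset by blast
    define P where "P = ?C - J"
    define U where "U = {I\<in>Is. I \<inter> (T - J) = {}}"
    have finU: "finite U" using fin unfolding U_def by simp
    have finP: "finite P" unfolding P_def by simp
    have intU: "\<forall>I\<in>U. \<exists>x y. x \<le> y \<and> I = {x..y}"
    proof
      fix I assume "I \<in> U"
      then have "I \<in> Is" unfolding U_def by simp
      then show "\<exists>x y. x \<le> y \<and> I = {x..y}" by (rule bspec[OF closed_intervals])
    qed
    have PU: "\<forall>I\<in>U. P \<inter> I \<noteq> {}"
    proof
      fix I assume I: "I \<in> U"
      show "P \<inter> I \<noteq> {}"
      proof
        assume "P \<inter> I = {}"
        then have "I \<inter> ?C \<subseteq> J" unfolding P_def by auto
        then have "card (I \<inter> ?C) \<le> card J" using finJ by (rule card_mono[rotated])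
        moreover have "card (I \<inter> ?C) > f" using big I unfolding U_def by auto
        ultimately show False using J by linarith
      qed
    qed
    have "\<exists>R S. R \<subseteq> P \<and> S \<subseteq> U \<and> (\<forall>I\<in>U. R \<inter> I \<noteq> {}) \<and>
     (\<forall>I1\<in>S. \<forall>I2\<in>S. \<forall>x\<in>P. x \<in> I1 \<and> x \<in> I2 \<longrightarrow> I1 = I2) \<and> card R \<le> card S"
      by (rule stab[OF finU finP intU PU])
    then obtain R S where RS: "R \<subseteq> P" "S \<subseteq> U" "\<forall>I\<in>U. R \<inter> I \<noteq> {}"
      "\<forall>I1\<in>S. \<forall>I2\<in>S. \<forall>x\<in>P. x \<in> I1 \<and> x \<in> I2 \<longrightarrow> I1 = I2" "card R \<le> card S"
      by (elim exE conjE)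
    have finS: "finite S" using RS(2) finU finite_subset by blast
    have SI: "S \<subseteq> Iij ?C c Is 1 m" using RS(2) unfolding U_def Iij_def Cij_def by auto
    have Sdis: "X_disjoint (?C - J) S" unfolding X_disjoint_iff[OF finS] using RS(4) unfolding P_def by blast
    have SU: "\<forall>I\<in>S. I \<inter> (T - J) = {}" using RS(2) unfolding U_def by auto
    have J1: "J \<subseteq> ?C" and J2: "card J \<le> f" using J by auto
    have "card S \<le> card (T \<inter> J \<inter> Cij c 1 m)"
      by (rule block[OF sorted distinct fin closed_intervals big hyp J1 J2 order.refl order.refl SI SU Sdis])
    also have "\<dots> \<le> card (T \<inter> J)" using finT by (intro card_mono) auto
    finally have cS: "card S \<le> card (T \<inter> J)" .
    show "\<exists>R. R \<subseteq> ?C - J \<and> card (T - J \<union> R) \<le> card T \<and> hits (T - J \<union> R) Is"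
    proof (intro exI[of _ R] conjI)
      show "R \<subseteq> ?C - J" using RS(1) unfolding P_def .
      have "card (T - J \<union> R) \<le> card (T - J) + card R" by (rule card_Un_le)
      also have "\<dots> \<le> card (T - J) + card (T \<inter> J)" using RS(5) cS by simp
      also have "\<dots> = card T" using card_Int_Diff[OF finT, of J] by simp
      finally show "card (T - J \<union> R) \<le> card T" .
      show "hits (T - J \<union> R) Is" unfolding hits_def
      proof
        fix I assume I: "I \<in> Is"
        show "(T - J \<union> R) \<inter> I \<noteq> {}"
        proof (cases "I \<inter> (T - J) = {}")
          case True
          then have "I \<in> U" using I unfolding U_def by simp
          then show ?thesis using RS(3) by blast
        qed blast
      qed
    qed
  qed
qed

end
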